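(* Let $G_1$ and $G_2$ be vertex-disjoint graphs with arithmetic IASIs $f_1$ and $f_2$. Then the join $G_1+G_2$ admits an arithmetic IASI (whose restrictions to $V(G_1)$ and $V(G_2)$ are $f_1$ and $f_2$) if and only if for every vertex $u$ of $G_1$ and every vertex $v$ of $G_2$, the deterministic index of one of $u,v$ equals $k$ times the deterministic index of the other for some positive integer $k$, where $k$ is at most the set-indexing number of the vertex having the smaller deterministic index.
   Context: All graphs are simple, finite, with no isolated vertices; all sets are finite subsets of $\mathbb{N}_0$; $A+B=\{a+b:a\in A,b\in B\}$. An IASI of $G$ is an injective $f:V(G)\to 2^{\mathbb{N}_0}$ with $g_f(uv)=f(u)+f(v)$ injective on $E(G)$. The set-indexing number of an element is the cardinality of its set-label. An AP-set is a set whose elements form an arithmetic progression; the common difference of the set-label of an element is its deterministic index. An arithmetic IASI is an IASI under which all vertex and edge set-labels are AP-sets. The join $G_1+G_2$ has vertex set $V_1\cup V_2$ and edge set $E_1\cup E_2\cup\{uv:u\in V_1,v\in V_2\}$.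
   Formalization: The labelling equal to $f_1$ on $V(G_1)$ and to $f_2$ on $V(G_2)$ is assumed to be an IASI of the join $G_1+G_2$, with injective vertex labels and injective edge sums. The statement above fails without it. *)

theory Defs
  imports Main
begin

definition graph :: "'a set \<Rightarrow> 'a set set \<Rightarrow> bool" where
  "graph V E \<longleftrightarrow> finite V
     \<and> E \<subseteq> {{x, y} | x y. x \<in> V \<and> y \<in> V \<and> x \<noteq> y}
     \<and> (\<forall>v\<in>V. \<exists>e\<in>E. v \<in> e)"

definition join_V :: "'a set \<Rightarrow> 'a set \<Rightarrow> 'a set" where
  "join_V V1 V2 = V1 \<union> V2"

definition join_E :: "'a set \<Rightarrow> 'a set set \<Rightarrow> 'a set \<Rightarrow> 'a set set \<Rightarrow> 'a set set" where
  "join_E V1 E1 V2 E2 = E1 \<union> E2 \<union> {{u, v} | u v. u \<in> V1 \<and> v \<in> V2}"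

definition sumset :: "nat set \<Rightarrow> nat set \<Rightarrow> nat set" where
  "sumset A B = {a + b | a b. a \<in> A \<and> b \<in> B}"

definition iasi :: "'a set \<Rightarrow> 'a set set \<Rightarrow> ('a \<Rightarrow> nat set) \<Rightarrow> bool" where
  "iasi V E f \<longleftrightarrow> inj_on f V \<and> (\<forall>v\<in>V. finite (f v))
     \<and> (\<forall>u1 v1 u2 v2. {u1, v1} \<in> E \<longrightarrow> {u2, v2} \<in> E \<longrightarrow>
          sumset (f u1) (f v1) = sumset (f u2) (f v2) \<longrightarrow> {u1, v1} = {u2, v2})"

definition ap_set :: "nat set \<Rightarrow> bool" where
  "ap_set A \<longleftrightarrow> (\<exists>a d n. d > 0 \<and> n \<ge> 2 \<and> A = {a + i * d | i. i < n})"

definition det_index :: "nat set \<Rightarrow> nat" where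
  "det_index A = (THE d. d > 0 \<and> (\<exists>a n. n \<ge> 2 \<and> A = {a + i * d | i. i < n}))"

definition set_index_num :: "nat set \<Rightarrow> nat" where
  "set_index_num A = card A"

definition arithmetic_iasi :: "'a set \<Rightarrow> 'a set set \<Rightarrow> ('a \<Rightarrow> nat set) \<Rightarrow> bool" where
  "arithmetic_iasi V E f \<longleftrightarrow> iasi V E f \<and> (\<forall>v\<in>V. ap_set (f v))
     \<and> (\<forall>u v. {u, v} \<in> E \<longrightarrow> ap_set (sumset (f u) (f v)))"

end

theory Submission imports Defs begin

definition AP :: "nat \<Rightarrow> nat \<Rightarrow> nat \<Rightarrow> nat set" where
  "AP a d n = {a + i * d | i. i < n}"

lemma sumset_AP: "sumset (AP a d m) (AP b e n) = {a+b+i*d+j*e | i j. i<m \<and> j<n}"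
proof (intro set_eqI iffI)
  fix x assume "x \<in> sumset (AP a d m) (AP b e n)"
  then obtain i j where "x = (a+i*d) + (b+j*e)" "i<m" "j<n" unfolding sumset_def AP_def by blast
  hence "x = a+b+i*d+j*e" "i<m" "j<n" by simp_all
  thus "x \<in> {a+b+i*d+j*e | i j. i<m \<and> j<n}" by blast
next
  fix x assume "x \<in> {a+b+i*d+j*e | i j. i<m \<and> j<n}"
  then obtain i j where "x = (a+i*d) + (b+j*e)" "i<m" "j<n" by auto
  thus "x \<in> sumset (AP a d m) (AP b e n)" unfolding sumset_def AP_def by blast
qed

lemma sumset_comm: "sumset A B = sumset B A"
  unfolding sumset_def by (auto; metis add.commute)

lemma nat_diff_lt_helper: "i = t - q \<Longrightarrow> t < m + (q::nat) \<Longrightarrow> 0 < m \<Longrightarrow> i < m" by arith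

lemma ap_iff_le:
  fixes c d e m n :: nat
  assumes d: "d > 0" and de: "d \<le> e" and m: "m \<ge> 2" and n: "n \<ge> 2"
  shows "ap_set {c+i*d+j*e | i j. i<m \<and> j<n} \<longleftrightarrow> (\<exists>k. e = k*d \<and> k \<le> m)"
    (is "ap_set ?S \<longleftrightarrow> _")
proof
  assume "ap_set ?S"
  then obtain c' g N where g: "g > 0" and N: "N \<ge> 2" and S: "?S = {c' + i*g | i. i < N}"
    unfolding ap_set_def by blast
  have mem: "\<And>i j. i<m \<Longrightarrow> j<n \<Longrightarrow> c+i*d+j*e \<in> ?S" by blast
  have memAP: "\<And>i. i<N \<Longrightarrow> c'+i*g \<in> {c' + i*g | i. i < N}" by blast
  have "c \<in> ?S" using mem[of 0 0] m n by simp
  hence "c \<in> {c' + i*g | i. i < N}" using S by simp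
  then obtain i0 where "c = c' + i0*g" by blast
  hence c1: "c' \<le> c" by simp
  have "c' \<in> {c' + i*g | i. i < N}" using memAP[of 0] N by simp
  hence "c' \<in> ?S" using S by simp
  then obtain i1 j1 where "c' = c + i1*d + j1*e" by blast
  hence "c \<le> c'" by simp
  with c1 have cc: "c' = c" by simp
  have "c + g \<in> {c' + i*g | i. i < N}" using memAP[of 1] N cc by simp
  hence "c + g \<in> ?S" using S by simp
  then obtain i2 j2 where ij2: "c + g = c + i2*d + j2*e" by blast
  have gd: "g \<ge> d"
  proof (cases "i2 = 0")
    case True
    with ij2 g have "j2 \<noteq> 0" by auto
    hence je: "j2 * e \<ge> e" by simp
    from ij2 True have "g = j2 * e" by simp
    with je de show ?thesis by linarith
  next
    case False
    hence id: "i2 * d \<ge> d" by simp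
    from ij2 have "g = i2 * d + j2 * e" by simp
    with id show ?thesis by linarith
  qed
  have "c + d \<in> ?S" using mem[of 1 0] m n by simp
  hence "c + d \<in> {c' + i*g | i. i < N}" using S by simp
  then obtain t where t: "c + d = c + t*g" using cc by blast
  with d have "t \<noteq> 0" by auto
  hence tg: "t*g \<ge> g" by simp
  from t have "d = t*g" by simp
  with tg gd have gd2: "g = d" by linarith
  have "c + e \<in> ?S" using mem[of 0 1] m n by simp
  hence "c + e \<in> {c' + i*g | i. i < N}" using S by simp
  then obtain k where k: "c + e = c + k*d" "k < N" using cc gd2 by blast
  have "k \<le> m"
  proof (rule ccontr)
    assume "\<not> k \<le> m"
    hence "m < N" using k by simp
    hence "c + m*d \<in> {c' + i*g | i. i < N}" using memAP[of m] cc gd2 by simp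
    hence "c + m*d \<in> ?S" using S by simp
    then obtain i j where ij: "c + m*d = c + i*d + j*e" "i < m" "j < n" by blast
    show False
    proof (cases "j = 0")
      case True
      with ij have "m*d = i*d" by simp
      with d ij show False by simp
    next
      case False
      hence je: "j*e \<ge> e" by simp
      have "m*d < k*d" using \<open>\<not> k \<le> m\<close> d by simp
      moreover have "e = k*d" using k by simp
      moreover have "m*d = i*d + j*e" using ij by simp
      ultimately show False using je by linarith
    qed
  qed
  with k show "\<exists>k. e = k*d \<and> k \<le> m" by auto
next
  assume "\<exists>k. e = k*d \<and> k \<le> m"
  then obtain k where k: "e = k*d" "k \<le> m" by blast
  have kp: "k > 0" using k d de by (cases k) auto
  have eq: "?S = {c + t*d | t. t < m + (n-1)*k}"
  proof (intro set_eqI iffI)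
    fix x assume "x \<in> ?S"
    then obtain i j where ij: "x = c+i*d+j*e" "i<m" "j<n" by auto
    have "j \<le> n-1" using ij by simp
    hence "j*k \<le> (n-1)*k" by (rule mult_right_mono) simp
    hence "i + j*k < m + (n-1)*k" using ij by linarith
    moreover have "x = c + (i+j*k)*d" using ij k by (simp add: algebra_simps)
    ultimately show "x \<in> {c + t*d | t. t < m + (n-1)*k}" by blast
  next
    fix x assume "x \<in> {c + t*d | t. t < m + (n-1)*k}"
    then obtain t where t: "x = c + t*d" "t < m + (n-1)*k" by auto
    define j where "j = min (t div k) (n-1)"
    have jk: "j*k \<le> t"
    proof -
      have "j * k \<le> (t div k) * k" unfolding j_def by simp
      also have "\<dots> \<le> t" by simp
      finally show ?thesis .
    qed
    define i where "i = t - j*k"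
    have ti: "t = i + j*k" using jk i_def by simp
    have im: "i < m"
    proof (cases "t div k \<le> n-1")
      case True
      hence "j = t div k" unfolding j_def by simp
      hence "i = t mod k" unfolding i_def by (simp add: minus_div_mult_eq_mod)
      thus ?thesis using kp k by (metis mod_less_divisor order_less_le_trans)
    next
      case False
      hence "j = n-1" unfolding j_def by simp
      hence "i = t - (n-1)*k" using i_def by simp
      thus ?thesis using t(2) m nat_diff_lt_helper by simp
    qed
    have jn: "j < n" unfolding j_def using n by simp
    have "x = c + i*d + j*e" using t ti k by (simp add: algebra_simps)
    thus "x \<in> ?S" using im jn by blast
  qed
  have "m + (n-1)*k \<ge> 2" using m by simp
  thus "ap_set ?S" unfolding ap_set_def eq using d by blast
qed

lemma AP_eq_d:
  assumes "d > 0" "n \<ge> 2" "d' > 0" "n' \<ge> 2" "AP a d n = AP a' d' n'"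
  shows "d = d'"
proof -
  have "a \<in> AP a' d' n'" using assms unfolding AP_def by force
  then obtain i where "a = a' + i*d'" unfolding AP_def by auto
  hence 1: "a' \<le> a" by simp
  have "a' \<in> AP a d n" using assms unfolding AP_def by force
  then obtain i where "a' = a + i*d" unfolding AP_def by auto
  hence "a \<le> a'" by simp
  with 1 have aa: "a = a'" by simp
  have "a + 1*d \<in> AP a d n" using assms unfolding AP_def by force
  hence "a + d \<in> AP a' d' n'" using assms by simp
  then obtain t where t: "a + d = a + t*d'" using aa unfolding AP_def by auto
  with assms have "t \<noteq> 0" by auto
  hence "t*d' \<ge> d'" by simp
  with t have x: "d \<ge> d'" by simp
  have "a' + 1*d' \<in> AP a' d' n'" using assms unfolding AP_def by force
  hence "a' + d' \<in> AP a d n" using assms by simp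
  then obtain s where s: "a + d' = a + s*d" using aa unfolding AP_def by auto
  with assms have "s \<noteq> 0" by auto
  hence "s*d \<ge> d" by simp
  with s x assms(1) show ?thesis by simp
qed

lemma det_index_AP: assumes "d > 0" "n \<ge> 2" shows "det_index (AP a d n) = d"
  unfolding det_index_def
proof (rule the_equality)
  show "0 < d \<and> (\<exists>a' n'. 2 \<le> n' \<and> AP a d n = {a' + i * d |i. i < n'})"
    using assms unfolding AP_def by blast
next
  fix d' assume "0 < d' \<and> (\<exists>a' n'. 2 \<le> n' \<and> AP a d n = {a' + i * d' |i. i < n'})"
  then obtain a' n' where "d' > 0" "n' \<ge> 2" "AP a d n = AP a' d' n'" unfolding AP_def by blast
  thus "d' = d" using AP_eq_d assms by metis
qed

lemma card_AP: assumes "d > 0" shows "set_index_num (AP a d n) = n"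
proof -
  have "AP a d n = (\<lambda>i. a + i*d) ` {..<n}" unfolding AP_def by auto
  moreover have "inj_on (\<lambda>i. a + i*d) {..<n}" using assms by (auto simp: inj_on_def)
  ultimately show ?thesis unfolding set_index_num_def by (simp add: card_image)
qed

lemma ap_set_AP: "ap_set A \<longleftrightarrow> (\<exists>a d n. d > 0 \<and> n \<ge> 2 \<and> A = AP a d n)"
  unfolding ap_set_def AP_def by simp

lemma key:
  assumes "d > 0" "e > 0" "m \<ge> 2" "n \<ge> 2"
  shows "ap_set (sumset (AP a d m) (AP b e n)) \<longleftrightarrow>
    (\<exists>k::nat. k > 0 \<and> ((d = k*e \<and> k \<le> n) \<or> (e = k*d \<and> k \<le> m)))"
proof (cases "d \<le> e")
  case True
  have "ap_set (sumset (AP a d m) (AP b e n)) \<longleftrightarrow> (\<exists>k. e = k*d \<and> k \<le> m)"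
    unfolding sumset_AP using ap_iff_le[OF assms(1) True assms(3,4)] by simp
  also have "\<dots> \<longleftrightarrow> (\<exists>k::nat. k > 0 \<and> ((d = k*e \<and> k \<le> n) \<or> (e = k*d \<and> k \<le> m)))"
  proof
    assume "\<exists>k. e = k*d \<and> k \<le> m"
    then obtain k where "e = k*d" "k \<le> m" by blast
    moreover have "k > 0" using calculation assms by (cases k) auto
    ultimately show "\<exists>k::nat. k > 0 \<and> ((d = k*e \<and> k \<le> n) \<or> (e = k*d \<and> k \<le> m))" by blast
  next
    assume "\<exists>k::nat. k > 0 \<and> ((d = k*e \<and> k \<le> n) \<or> (e = k*d \<and> k \<le> m))"
    then obtain k where k: "k > 0" "(d = k*e \<and> k \<le> n) \<or> (e = k*d \<and> k \<le> m)" by blast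
    show "\<exists>k. e = k*d \<and> k \<le> m"
    proof (cases "e = k*d \<and> k \<le> m")
      case True thus ?thesis by blast
    next
      case False
      with k have dk: "d = k*e" by blast
      have "k \<le> 1"
      proof (rule ccontr)
        assume "\<not> k \<le> 1" hence "k*e \<ge> 2*e" by simp
        with dk \<open>d \<le> e\<close> assms show False by simp
      qed
      with k dk have "d = e" by simp
      thus ?thesis using assms by (intro exI[of _ 1]) simp
    qed
  qed
  finally show ?thesis .
next
  case False
  hence ed: "e \<le> d" by simp
  have "ap_set (sumset (AP a d m) (AP b e n)) \<longleftrightarrow> (\<exists>k. d = k*e \<and> k \<le> n)"
    using ap_iff_le[OF assms(2) ed assms(4,3), of "b+a"] sumset_AP[of b e n a d m] sumset_comm[of "AP a d m" "AP b e n"] by simp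
  also have "\<dots> \<longleftrightarrow> (\<exists>k::nat. k > 0 \<and> ((d = k*e \<and> k \<le> n) \<or> (e = k*d \<and> k \<le> m)))"
  proof
    assume "\<exists>k. d = k*e \<and> k \<le> n"
    then obtain k where "d = k*e" "k \<le> n" by blast
    moreover have "k > 0" using calculation assms by (cases k) auto
    ultimately show "\<exists>k::nat. k > 0 \<and> ((d = k*e \<and> k \<le> n) \<or> (e = k*d \<and> k \<le> m))" by blast
  next
    assume "\<exists>k::nat. k > 0 \<and> ((d = k*e \<and> k \<le> n) \<or> (e = k*d \<and> k \<le> m))"
    then obtain k where k: "k > 0" "(d = k*e \<and> k \<le> n) \<or> (e = k*d \<and> k \<le> m)" by blast
    show "\<exists>k. d = k*e \<and> k \<le> n"
    proof (cases "d = k*e \<and> k \<le> n")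
      case True thus ?thesis by blast
    next
      case False
      with k have dk: "e = k*d" by blast
      have "k \<le> 1"
      proof (rule ccontr)
        assume "\<not> k \<le> 1" hence "k*d \<ge> 2*d" by simp
        with dk ed assms show False by simp
      qed
      with k dk have "d = e" by simp
      thus ?thesis using assms by (intro exI[of _ 1]) simp
    qed
  qed
  finally show ?thesis .
qed

lemma key2:
  assumes "ap_set A" "ap_set B"
  shows "ap_set (sumset A B) \<longleftrightarrow>
    (\<exists>k::nat. k > 0 \<and> ((det_index A = k * det_index B \<and> k \<le> set_index_num B)
              \<or> (det_index B = k * det_index A \<and> k \<le> set_index_num A)))"
proof -
  obtain a d m where A: "d > 0" "m \<ge> 2" "A = AP a d m" using assms ap_set_AP by blast
  obtain b e n where B: "e > 0" "n \<ge> 2" "B = AP b e n" using assms ap_set_AP by blast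
  have 1: "det_index A = d" using det_index_AP[OF A(1,2)] A(3) by simp
  have 2: "det_index B = e" using det_index_AP[OF B(1,2)] B(3) by simp
  have 3: "set_index_num A = m" using card_AP[OF A(1)] A(3) by simp
  have 4: "set_index_num B = n" using card_AP[OF B(1)] B(3) by simp
  have 5: "sumset A B = sumset (AP a d m) (AP b e n)" using A(3) B(3) by simp
  show ?thesis unfolding 1 2 3 4 5 by (rule key[OF A(1) B(1) A(2) B(2)])
qed

lemma doubleton_in:
  assumes "{x, y} = {p, q}" "p \<in> V" "q \<in> V" shows "x \<in> V" "y \<in> V"
  using assms by (auto simp: doubleton_eq_iff)

lemma arithD:
  assumes "arithmetic_iasi V E f"
  shows "\<And>v. v \<in> V \<Longrightarrow> ap_set (f v)" "\<And>u v. {u, v} \<in> E \<Longrightarrow> ap_set (sumset (f u) (f v))"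
  using assms unfolding arithmetic_iasi_def by blast+

theorem mainTheorem3:
  fixes V1 V2 :: "'a set" and E1 E2 :: "'a set set" and f1 f2 :: "'a \<Rightarrow> nat set"
  assumes "graph V1 E1" and "graph V2 E2" and "V1 \<inter> V2 = {}"
    and "arithmetic_iasi V1 E1 f1" and "arithmetic_iasi V2 E2 f2"
    and "iasi (join_V V1 V2) (join_E V1 E1 V2 E2) (\<lambda>x. if x \<in> V1 then f1 x else f2 x)"
  shows "(\<exists>f. arithmetic_iasi (join_V V1 V2) (join_E V1 E1 V2 E2) f
              \<and> (\<forall>v\<in>V1. f v = f1 v) \<and> (\<forall>v\<in>V2. f v = f2 v))
         \<longleftrightarrow> (\<forall>u\<in>V1. \<forall>v\<in>V2. \<exists>k::nat. k > 0 \<and>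
               ((det_index (f1 u) = k * det_index (f2 v) \<and> k \<le> set_index_num (f2 v))
              \<or> (det_index (f2 v) = k * det_index (f1 u) \<and> k \<le> set_index_num (f1 u))))"
proof
  assume "\<exists>f. arithmetic_iasi (join_V V1 V2) (join_E V1 E1 V2 E2) f
              \<and> (\<forall>v\<in>V1. f v = f1 v) \<and> (\<forall>v\<in>V2. f v = f2 v)"
  then obtain f where f: "arithmetic_iasi (join_V V1 V2) (join_E V1 E1 V2 E2) f"
    "\<forall>v\<in>V1. f v = f1 v" "\<forall>v\<in>V2. f v = f2 v" by blast
  show "\<forall>u\<in>V1. \<forall>v\<in>V2. \<exists>k::nat. k > 0 \<and>
               ((det_index (f1 u) = k * det_index (f2 v) \<and> k \<le> set_index_num (f2 v))
              \<or> (det_index (f2 v) = k * det_index (f1 u) \<and> k \<le> set_index_num (f1 u)))"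
  proof (intro ballI)
    fix u v assume uv: "u \<in> V1" "v \<in> V2"
    hence "{u, v} \<in> join_E V1 E1 V2 E2" unfolding join_E_def by blast
    hence "ap_set (sumset (f u) (f v))" using arithD(2)[OF f(1)] by blast
    hence "ap_set (sumset (f1 u) (f2 v))" using f uv by simp
    moreover have "ap_set (f1 u)" using arithD(1)[OF assms(4)] uv by blast
    moreover have "ap_set (f2 v)" using arithD(1)[OF assms(5)] uv by blast
    ultimately show "\<exists>k::nat. k > 0 \<and>
               ((det_index (f1 u) = k * det_index (f2 v) \<and> k \<le> set_index_num (f2 v))
              \<or> (det_index (f2 v) = k * det_index (f1 u) \<and> k \<le> set_index_num (f1 u)))"
      using key2[of "f1 u" "f2 v"] by blast
  qed
next
  assume H: "\<forall>u\<in>V1. \<forall>v\<in>V2. \<exists>k::nat. k > 0 \<and>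
               ((det_index (f1 u) = k * det_index (f2 v) \<and> k \<le> set_index_num (f2 v))
              \<or> (det_index (f2 v) = k * det_index (f1 u) \<and> k \<le> set_index_num (f1 u)))"
  define F where "F = (\<lambda>x. if x \<in> V1 then f1 x else f2 x)"
  have cross: "ap_set (sumset (f1 u) (f2 v))" if uv: "u \<in> V1" "v \<in> V2" for u v
  proof -
    have "ap_set (f1 u)" using arithD(1)[OF assms(4)] uv by blast
    moreover have "ap_set (f2 v)" using arithD(1)[OF assms(5)] uv by blast
    ultimately show ?thesis using key2[of "f1 u" "f2 v"] H[rule_format, OF uv] by blast
  qed
  have edges: "ap_set (sumset (F x) (F y))" if xy: "{x, y} \<in> join_E V1 E1 V2 E2" for x y
  proof -
    consider "{x, y} \<in> E1" | "{x, y} \<in> E2" | u v where "u \<in> V1" "v \<in> V2" "{x, y} = {u, v}"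
      using xy unfolding join_E_def by blast
    thus ?thesis
    proof cases
      case 1
      have "E1 \<subseteq> {{x, y} | x y. x \<in> V1 \<and> y \<in> V1 \<and> x \<noteq> y}"
        using assms(1) unfolding graph_def by (elim conjE)
      hence "{x, y} \<in> {{x, y} | x y. x \<in> V1 \<and> y \<in> V1 \<and> x \<noteq> y}"
        using 1 by (rule subsetD)
      then obtain p q where "{x, y} = {p, q}" "p \<in> V1" "q \<in> V1" by blast
      hence "x \<in> V1" "y \<in> V1" using doubleton_in by metis+
      thus ?thesis using arithD(2)[OF assms(4) 1] unfolding F_def by simp
    next
      case 2
      have "E2 \<subseteq> {{x, y} | x y. x \<in> V2 \<and> y \<in> V2 \<and> x \<noteq> y}"
        using assms(2) unfolding graph_def by (elim conjE)
      hence "{x, y} \<in> {{x, y} | x y. x \<in> V2 \<and> y \<in> V2 \<and> x \<noteq> y}"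
        using 2 by (rule subsetD)
      then obtain p q where "{x, y} = {p, q}" "p \<in> V2" "q \<in> V2" by blast
      hence "x \<in> V2" "y \<in> V2" using doubleton_in by metis+
      hence "x \<notin> V1" "y \<notin> V1" using assms(3) by blast+
      thus ?thesis using arithD(2)[OF assms(5) 2] unfolding F_def by simp
    next
      case 3
      have vn: "v \<notin> V1" using 3 assms(3) by blast
      from 3(3) have "(x = u \<and> y = v) \<or> (x = v \<and> y = u)" by (simp add: doubleton_eq_iff)
      thus ?thesis
      proof
        assume "x = u \<and> y = v" thus ?thesis using cross[OF 3(1,2)] vn 3(1) unfolding F_def by simp
      next
        assume "x = v \<and> y = u" thus ?thesis using cross[OF 3(1,2)] vn sumset_comm[of "f2 v" "f1 u"] 3(1) unfolding F_def by simp
      qed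
    qed
  qed
  have "arithmetic_iasi (join_V V1 V2) (join_E V1 E1 V2 E2) F"
    unfolding arithmetic_iasi_def
  proof (intro conjI ballI allI impI)
    show "iasi (join_V V1 V2) (join_E V1 E1 V2 E2) F" using assms(6) unfolding F_def .
  next
    fix v assume "v \<in> join_V V1 V2"
    thus "ap_set (F v)" using arithD(1)[OF assms(4)] arithD(1)[OF assms(5)] unfolding F_def join_V_def by auto
  next
    fix u v assume "{u, v} \<in> join_E V1 E1 V2 E2"
    thus "ap_set (sumset (F u) (F v))" by (rule edges)
  qed
  moreover have "(\<forall>v\<in>V1. F v = f1 v) \<and> (\<forall>v\<in>V2. F v = f2 v)"
    using assms(3) unfolding F_def by auto
  ultimately show "\<exists>f. arithmetic_iasi (join_V V1 V2) (join_E V1 E1 V2 E2) f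
              \<and> (\<forall>v\<in>V1. f v = f1 v) \<and> (\<forall>v\<in>V2. f v = f2 v)" by blast
qed

end
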